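(* Let $Q$ be a conjunctive query without self-joins that is connected, non-boolean, and contains no universal attribute and no vacuum relation. Then $Q$ contains a hard structure.
   Context: CQ $Q(\mathbf{A}) :- R_1(\mathbb{A}_1),\dots,R_p(\mathbb{A}_p)$ with distinct relation symbols, $\mathrm{attr}(R_i)=\mathbb{A}_i$, $\mathrm{attr}(Q)=\bigcup_i\mathbb{A}_i$, $\mathrm{head}(Q)=\mathbf{A}$. $Q$ is boolean if $\mathbf{A}=\emptyset$; connected if the graph on relations, with edges between relations sharing an attribute, is connected; a relation is vacuum if its attribute set is empty; an attribute is universal if it lies in $\mathbf{A}$ and in every $\mathbb{A}_i$. Standing assumption: distinct relations have distinct attribute sets. $R_j$ is exogenous if another relation $R_i$ has $\mathrm{attr}(R_i)\subsetneq\mathrm{attr}(R_j)$, endogenous otherwise. A path between relations using only attributes in $S$ is a sequence of relations with consecutive ones sharing an attribute of $S$. Triad-like structure: three endogenous relations such that each pair is joined by a path using only attributes in $\mathrm{attr}(Q)\setminus(\mathrm{head}(Q)\cup\mathrm{attr}(R))$, $R$ the third. $R_j$ is dominated by $R_i$ if (1) $\mathrm{attr}(R_i)\subseteq\mathrm{attr}(R_j)$; (2) for every $R_k$ with $\mathrm{attr}(R_i)\setminus\mathrm{attr}(R_k)\ne\emptyset$, $\mathrm{attr}(R_j)\cap\mathrm{attr}(R_k)\subseteq\mathrm{attr}(R_i)\cap\mathrm{head}(Q)$; (3) $\mathrm{attr}(R_i)\subseteq\mathrm{head}(Q)$ or $\mathrm{head}(Q)\subseteq\mathrm{attr}(R_i)$;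 non-dominated relations are dominated by no other relation. Strand: two non-dominated relations $R_i,R_j$ with $\mathrm{head}(Q)\cap\mathrm{attr}(R_i)\ne\mathrm{head}(Q)\cap\mathrm{attr}(R_j)$ and $(\mathrm{attr}(R_i)\cap\mathrm{attr}(R_j))\setminus\mathrm{head}(Q)\ne\emptyset$. The head join of non-dominated relations is the full query of non-dominated relations restricted to $\mathrm{head}(Q)$; a full query is hierarchical if for all attributes $A,B$ the sets of relations containing them are nested or disjoint. $Q$ contains a hard structure if it has a triad-like structure or a strand, or the head join of its non-dominated relations is non-hierarchical. *)

theory Defs
  imports Main
begin

text \<open>A conjunctive query without self-joins is represented by a finite nonempty set
  I of relation symbols (distinct by construction), the attribute map att giving
  attr(R_i), and the head attribute set H.  attr(Q) is the union of all att i.\<close>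

definition attrQ :: "'r set \<Rightarrow> ('r \<Rightarrow> 'a set) \<Rightarrow> 'a set" where
  "attrQ I att = (\<Union>i\<in>I. att i)"

definition wf_cq :: "'r set \<Rightarrow> ('r \<Rightarrow> 'a set) \<Rightarrow> 'a set \<Rightarrow> bool" where
  "wf_cq I att H \<longleftrightarrow> finite I \<and> I \<noteq> {} \<and> (\<forall>i\<in>I. finite (att i))
     \<and> inj_on att I \<and> H \<subseteq> attrQ I att"

definition is_boolean :: "'a set \<Rightarrow> bool" where
  "is_boolean H \<longleftrightarrow> H = {}"

definition is_path :: "'r set \<Rightarrow> ('r \<Rightarrow> 'a set) \<Rightarrow> 'a set \<Rightarrow> 'r list \<Rightarrow> bool" where
  "is_path I att S xs \<longleftrightarrow> xs \<noteq> [] \<and> set xs \<subseteq> I \<and>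
     (\<forall>k. Suc k < length xs \<longrightarrow> att (xs ! k) \<inter> att (xs ! Suc k) \<inter> S \<noteq> {})"

definition path_between :: "'r set \<Rightarrow> ('r \<Rightarrow> 'a set) \<Rightarrow> 'a set \<Rightarrow> 'r \<Rightarrow> 'r \<Rightarrow> bool" where
  "path_between I att S i j \<longleftrightarrow> (\<exists>xs. is_path I att S xs \<and> hd xs = i \<and> last xs = j)"

definition connected_cq :: "'r set \<Rightarrow> ('r \<Rightarrow> 'a set) \<Rightarrow> bool" where
  "connected_cq I att \<longleftrightarrow> (\<forall>i\<in>I. \<forall>j\<in>I. path_between I att UNIV i j)"

definition vacuum :: "('r \<Rightarrow> 'a set) \<Rightarrow> 'r \<Rightarrow> bool" where
  "vacuum att i \<longleftrightarrow> att i = {}"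

definition universal_attr :: "'r set \<Rightarrow> ('r \<Rightarrow> 'a set) \<Rightarrow> 'a set \<Rightarrow> 'a \<Rightarrow> bool" where
  "universal_attr I att H A \<longleftrightarrow> A \<in> H \<and> (\<forall>i\<in>I. A \<in> att i)"

definition exogenous :: "'r set \<Rightarrow> ('r \<Rightarrow> 'a set) \<Rightarrow> 'r \<Rightarrow> bool" where
  "exogenous I att j \<longleftrightarrow> (\<exists>i\<in>I. att i \<subset> att j)"

definition endogenous :: "'r set \<Rightarrow> ('r \<Rightarrow> 'a set) \<Rightarrow> 'r \<Rightarrow> bool" where
  "endogenous I att j \<longleftrightarrow> j \<in> I \<and> \<not> exogenous I att j"

definition triad_like :: "'r set \<Rightarrow> ('r \<Rightarrow> 'a set) \<Rightarrow> 'a set \<Rightarrow> bool" where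
  "triad_like I att H \<longleftrightarrow> (\<exists>r1 r2 r3.
     r1 \<noteq> r2 \<and> r2 \<noteq> r3 \<and> r1 \<noteq> r3 \<and>
     endogenous I att r1 \<and> endogenous I att r2 \<and> endogenous I att r3 \<and>
     path_between I att (attrQ I att - (H \<union> att r3)) r1 r2 \<and>
     path_between I att (attrQ I att - (H \<union> att r1)) r2 r3 \<and>
     path_between I att (attrQ I att - (H \<union> att r2)) r1 r3)"

text \<open>dominated_by I att H j i: R_j is dominated by R_i.\<close>
definition dominated_by :: "'r set \<Rightarrow> ('r \<Rightarrow> 'a set) \<Rightarrow> 'a set \<Rightarrow> 'r \<Rightarrow> 'r \<Rightarrow> bool" where
  "dominated_by I att H j i \<longleftrightarrow>
     att i \<subseteq> att j \<and>
     (\<forall>k\<in>I. att i - att k \<noteq> {} \<longrightarrow> att j \<inter> att k \<subseteq> att i \<inter> H) \<and>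
     (att i \<subseteq> H \<or> H \<subseteq> att i)"

definition non_dominated :: "'r set \<Rightarrow> ('r \<Rightarrow> 'a set) \<Rightarrow> 'a set \<Rightarrow> 'r \<Rightarrow> bool" where
  "non_dominated I att H j \<longleftrightarrow> j \<in> I \<and> \<not> (\<exists>i\<in>I. i \<noteq> j \<and> dominated_by I att H j i)"

definition strand :: "'r set \<Rightarrow> ('r \<Rightarrow> 'a set) \<Rightarrow> 'a set \<Rightarrow> bool" where
  "strand I att H \<longleftrightarrow> (\<exists>i j. non_dominated I att H i \<and> non_dominated I att H j \<and>
     H \<inter> att i \<noteq> H \<inter> att j \<and> (att i \<inter> att j) - H \<noteq> {})"

definition hierarchical :: "'r set \<Rightarrow> ('r \<Rightarrow> 'a set) \<Rightarrow> bool" where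
  "hierarchical J b \<longleftrightarrow> (\<forall>A B.
     let RA = {i\<in>J. A \<in> b i}; RB = {i\<in>J. B \<in> b i} in
     RA \<subseteq> RB \<or> RB \<subseteq> RA \<or> RA \<inter> RB = {})"

definition head_join_hierarchical :: "'r set \<Rightarrow> ('r \<Rightarrow> 'a set) \<Rightarrow> 'a set \<Rightarrow> bool" where
  "head_join_hierarchical I att H \<longleftrightarrow>
     hierarchical {i. non_dominated I att H i} (\<lambda>i. att i \<inter> H)"

definition hard_structure :: "'r set \<Rightarrow> ('r \<Rightarrow> 'a set) \<Rightarrow> 'a set \<Rightarrow> bool" where
  "hard_structure I att H \<longleftrightarrow>
     triad_like I att H \<or> strand I att H \<or> \<not> head_join_hierarchical I att H"

end

theory Submission
  imports Defs
begin

lemma dom_trans: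
  assumes "dominated_by I att H j i" "dominated_by I att H i l"
  shows "dominated_by I att H j l"
proof -
  have s1: "att i \<subseteq> att j" and c1: "\<forall>k\<in>I. att i - att k \<noteq> {} \<longrightarrow> att j \<inter> att k \<subseteq> att i \<inter> H"
    using assms(1) unfolding dominated_by_def by auto
  have s2: "att l \<subseteq> att i" and c2: "\<forall>k\<in>I. att l - att k \<noteq> {} \<longrightarrow> att i \<inter> att k \<subseteq> att l \<inter> H"
    and c3: "att l \<subseteq> H \<or> H \<subseteq> att l"
    using assms(2) unfolding dominated_by_def by auto
  have "\<forall>k\<in>I. att l - att k \<noteq> {} \<longrightarrow> att j \<inter> att k \<subseteq> att l \<inter> H"
  proof (intro ballI impI)
    fix k assume k: "k \<in> I" "att l - att k \<noteq> {}"
    then have "att i - att k \<noteq> {}" using s2 by blast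
    then have "att j \<inter> att k \<subseteq> att i \<inter> H" using c1 k by blast
    moreover have "att i \<inter> att k \<subseteq> att l \<inter> H" using c2 k by blast
    ultimately show "att j \<inter> att k \<subseteq> att l \<inter> H" by blast
  qed
  then show ?thesis using s1 s2 c3 unfolding dominated_by_def by blast
qed

lemma exists_nd:
  assumes wf: "wf_cq I att H"
  shows "j \<in> I \<Longrightarrow> \<exists>i. non_dominated I att H i \<and> att i \<subseteq> att j \<and> (i = j \<or> dominated_by I att H j i)"
proof (induction "card (att j)" arbitrary: j rule: less_induct)
  case less
  show ?case
  proof (cases "non_dominated I att H j")
    case True then show ?thesis by blast
  next
    case False
    then obtain i where i: "i \<in> I" "i \<noteq> j" "dominated_by I att H j i"
      using less.prems unfolding non_dominated_def by blast
    have sub: "att i \<subseteq> att j" using i(3) unfolding dominated_by_def by blast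
    have "att i \<noteq> att j" using wf i(1,2) less.prems unfolding wf_cq_def inj_on_def by blast
    moreover have "finite (att j)" using wf less.prems unfolding wf_cq_def by blast
    ultimately have "card (att i) < card (att j)" using sub by (meson psubsetI psubset_card_mono)
    then obtain l where l: "non_dominated I att H l" "att l \<subseteq> att i" "l = i \<or> dominated_by I att H i l"
      using less.hyps i(1) by blast
    have "dominated_by I att H j l" using l(3) i(3) dom_trans by metis
    then show ?thesis using l sub by blast
  qed
qed

theorem lemma16:
  fixes I :: "'r set" and att :: "'r \<Rightarrow> 'a set" and H :: "'a set"
  assumes "wf_cq I att H"
    and "connected_cq I att"
    and "\<not> is_boolean H"
    and "\<forall>A. \<not> universal_attr I att H A"
    and "\<forall>i\<in>I. \<not> vacuum att i"
  shows "hard_structure I att H"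
proof (rule ccontr)
  assume nh: "\<not> hard_structure I att H"
  have nostrand: "\<not> strand I att H" and hier: "head_join_hierarchical I att H"
    using nh unfolding hard_structure_def by auto
  have wf: "wf_cq I att H" using assms(1) .
  have finI: "finite I" and HQ: "H \<subseteq> attrQ I att" using wf unfolding wf_cq_def by auto
  have nonvac: "\<And>i. i \<in> I \<Longrightarrow> att i \<noteq> {}" using assms(5) unfolding vacuum_def by blast
  define N where "N = {i. non_dominated I att H i}"
  have NI: "N \<subseteq> I" unfolding N_def non_dominated_def by blast
  define NB where "NB = (\<lambda>B. {i\<in>N. B \<in> att i \<inter> H})"
  have finNB: "finite (NB B)" for B using NI finI unfolding NB_def
    by (metis (no_types, lifting) mem_Collect_eq rev_finite_subset subsetI)
  have lam: "NB B \<subseteq> NB C \<or> NB C \<subseteq> NB B \<or> NB B \<inter> NB C = {}" for B C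
    using hier[unfolded head_join_hierarchical_def hierarchical_def, rule_format, of B C]
    unfolding Let_def NB_def N_def by simp
  obtain A0 where A0: "A0 \<in> H" using assms(3) unfolding is_boolean_def by blast
  then obtain j0 where j0: "j0 \<in> I" "A0 \<in> att j0" using HQ unfolding attrQ_def by blast
  obtain i0 where i0: "non_dominated I att H i0" "att i0 \<subseteq> att j0" "i0 = j0 \<or> dominated_by I att H j0 i0"
    using exists_nd[OF wf j0(1)] by blast
  have "\<exists>B\<in>H. B \<in> att i0"
  proof (cases "i0 = j0")
    case True then show ?thesis using j0 A0 by blast
  next
    case False
    then have "att i0 \<subseteq> H \<or> H \<subseteq> att i0" using i0(3) unfolding dominated_by_def by blast
    moreover have "att i0 \<noteq> {}" using nonvac i0(1) unfolding non_dominated_def by blast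
    ultimately show ?thesis using A0 by blast
  qed
  then obtain B0 where B0: "B0 \<in> H \<and> NB B0 \<noteq> {}" using i0(1) unfolding NB_def N_def by blast
  have bnd: "\<forall>y. y \<in> H \<and> NB y \<noteq> {} \<longrightarrow> card (NB y) < Suc (card I)"
    using NI finI unfolding NB_def
    by (metis (no_types, lifting) card_mono le_imp_less_Suc mem_Collect_eq subset_iff)
  obtain A where A: "A \<in> H" "NB A \<noteq> {}" and Amax: "\<forall>y. y \<in> H \<and> NB y \<noteq> {} \<longrightarrow> card (NB y) \<le> card (NB A)"
    using ex_has_greatest_nat[of "\<lambda>B. B \<in> H \<and> NB B \<noteq> {}", OF B0 bnd] by blast
  define M where "M = NB A"
  have MN: "M \<subseteq> N" unfolding M_def NB_def by blast
  have AM: "\<And>i. i \<in> M \<Longrightarrow> A \<in> att i" unfolding M_def NB_def by blast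
  have notAM: "\<And>k. k \<in> N - M \<Longrightarrow> A \<notin> att k" using A(1) unfolding M_def NB_def by blast
  have sep: "att i \<inter> att k = {}" if i: "i \<in> M" and k: "k \<in> N - M" for i k
  proof (rule ccontr)
    assume "att i \<inter> att k \<noteq> {}"
    then obtain x where x: "x \<in> att i" "x \<in> att k" by blast
    show False
    proof (cases "x \<in> H")
      case False
      have "H \<inter> att i \<noteq> H \<inter> att k" using AM[OF i] notAM[OF k] A(1) by blast
      moreover have "(att i \<inter> att k) - H \<noteq> {}" using x False by blast
      ultimately have "strand I att H" unfolding strand_def using i k MN unfolding N_def by blast
      then show False using nostrand by blast
    next
      case True
      have iN: "i \<in> N" and kN: "k \<in> N" using i k MN by auto
      have iB: "i \<in> NB x" using x(1) True iN unfolding NB_def by simp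
      have kB: "k \<in> NB x" using x(2) True kN unfolding NB_def by simp
      have n1: "\<not> NB x \<subseteq> M" using kB k by blast
      have n2: "M \<inter> NB x \<noteq> {}" using iB i by blast
      have "M \<subseteq> NB x" using lam[of A x] n1 n2 unfolding M_def by argo
      then have "M \<subset> NB x" using kB k by blast
      then have "card M < card (NB x)" using finNB psubset_card_mono by blast
      moreover have "card (NB x) \<le> card M" using Amax True kB unfolding M_def by blast
      ultimately show False by simp
    qed
  qed
  obtain l where l: "l \<in> M" using A(2) unfolding M_def by blast
  obtain ja where ja: "ja \<in> I" "A \<notin> att ja" using assms(4) A(1) unfolding universal_attr_def by blast
  obtain r where r: "non_dominated I att H r" "att r \<subseteq> att ja"
    using exists_nd[OF wf ja(1)] by blast
  have rNM: "r \<in> N - M" using r ja(2) AM unfolding N_def by blast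
  define L where "L = {j\<in>I. \<exists>i\<in>M. i = j \<or> dominated_by I att H j i}"
  have key: "att j \<inter> att j' = {}" if jL: "j \<in> L" and jR: "j' \<in> I - L" for j j'
  proof -
    obtain i where i: "i \<in> M" "i = j \<or> dominated_by I att H j i" using jL unfolding L_def by blast
    obtain i' where i': "non_dominated I att H i'" "i' = j' \<or> dominated_by I att H j' i'"
      using exists_nd[OF wf] jR by blast
    have i'NM: "i' \<in> N - M" using i' jR unfolding L_def N_def non_dominated_def by blast
    have iI: "i \<in> I" and i'I: "i' \<in> I" using i(1) i'NM MN NI by auto
    have s0: "att i \<inter> att i' = {}" using sep i(1) i'NM by blast
    have s1: "att j \<inter> att i' = {}"
    proof (cases "i = j")
      case True then show ?thesis using s0 by simp
    next
      case False
      then have d: "dominated_by I att H j i" using i(2) by blast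
      have "att i - att i' \<noteq> {}" using s0 nonvac[OF iI] by blast
      then have "att j \<inter> att i' \<subseteq> att i \<inter> H" using d i'I unfolding dominated_by_def by blast
      then show ?thesis using s0 by blast
    qed
    show ?thesis
    proof (cases "i' = j'")
      case True then show ?thesis using s1 by blast
    next
      case False
      then have d: "dominated_by I att H j' i'" using i'(2) by blast
      have "att i' - att j \<noteq> {}" using s1 nonvac[OF i'I] by blast
      then have "att j' \<inter> att j \<subseteq> att i' \<inter> H" using d jL unfolding dominated_by_def L_def by blast
      then show ?thesis using s1 by blast
    qed
  qed
  have lL: "l \<in> L" using l MN NI unfolding L_def by blast
  have rR: "r \<in> I - L"
  proof -
    have "r \<in> I" using r(1) unfolding non_dominated_def by blast
    moreover have "r \<notin> L"
    proof
      assume "r \<in> L"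
      then obtain i where i: "i \<in> M" "i = r \<or> dominated_by I att H r i" unfolding L_def by blast
      have "i \<noteq> r" using i(1) rNM by blast
      moreover have "i \<in> I" using i(1) MN NI by blast
      ultimately show False using i(2) r(1) unfolding non_dominated_def by blast
    qed
    ultimately show ?thesis by blast
  qed
  obtain xs where xs: "is_path I att UNIV xs" "hd xs = l" "last xs = r"
    using assms(2) lL rR unfolding connected_cq_def path_between_def L_def by blast
  have ne: "xs \<noteq> []" and setI: "set xs \<subseteq> I"
    and st: "\<And>k. Suc k < length xs \<Longrightarrow> att (xs ! k) \<inter> att (xs ! Suc k) \<noteq> {}"
    using xs(1) unfolding is_path_def by auto
  have allL: "k < length xs \<Longrightarrow> xs ! k \<in> L" for k
  proof (induction k)
    case 0 then show ?case using xs(2) ne lL by (simp add: hd_conv_nth)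
  next
    case (Suc k)
    then have "xs ! k \<in> L" by simp
    moreover have "xs ! Suc k \<in> I" using Suc.prems setI by (meson nth_mem subsetD)
    moreover have "att (xs ! k) \<inter> att (xs ! Suc k) \<noteq> {}" using st Suc.prems by blast
    ultimately show ?case using key by blast
  qed
  have "last xs \<in> L" using allL[of "length xs - 1"] ne by (simp add: last_conv_nth)
  then show False using xs(3) rR by blast
qed

end
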